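(* Let $G=(V,E)$ be a finite simple graph of order $n$. For each feasible solution $(x,z)$ of the Fort Number Model $\mathrm{FN}(G)$ there is a collection $\mathcal{F}$ of pairwise disjoint forts of $G$ with $|\mathcal{F}|=\sum_{i=1}^n z_i$.
   Context: $N(u)$ denotes the neighborhood of $u$. A fort of $G$ is a non-empty set $F\subseteq V$ such that no vertex $u\in V\setminus F$ has exactly one neighbor in $F$. The Fort Number Model $\mathrm{FN}(G)$ has binary variables $x_{iv}$ ($i\in\{1,\dots,n\}$, $v\in V$) and $z_i$ ($i\in\{1,\dots,n\}$), with constraints: $z_i-\sum_{u\in V}x_{iu}\leq0$ for all $i$; $x_{iu}-x_{iv}+\sum_{w\in N(u)\setminus\{v\}}x_{iw}\geq0$ for all $i$, all $v\in V$ and all $u\in N(v)$; $\sum_{i=1}^n x_{iu}\leq1$ for all $u\in V$. Its objective is to maximize $\sum_{i=1}^n z_i$. A feasible solution is one satisfying all constraints. *)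

theory Defs
  imports Main
begin

definition simple_graph :: "'a set \<Rightarrow> ('a \<Rightarrow> 'a \<Rightarrow> bool) \<Rightarrow> bool" where
  "simple_graph V E \<longleftrightarrow> finite V \<and> (\<forall>u v. E u v \<longrightarrow> u \<in> V \<and> v \<in> V)
     \<and> (\<forall>u v. E u v \<longrightarrow> E v u) \<and> (\<forall>u. \<not> E u u)"

definition nbhd :: "'a set \<Rightarrow> ('a \<Rightarrow> 'a \<Rightarrow> bool) \<Rightarrow> 'a \<Rightarrow> 'a set" where
  "nbhd V E u = {w \<in> V. E u w}"

definition is_fort :: "'a set \<Rightarrow> ('a \<Rightarrow> 'a \<Rightarrow> bool) \<Rightarrow> 'a set \<Rightarrow> bool" where
  "is_fort V E F \<longleftrightarrow> F \<noteq> {} \<and> F \<subseteq> V \<and>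
     (\<forall>u \<in> V - F. card (nbhd V E u \<inter> F) \<noteq> 1)"

definition FN_feasible :: "'a set \<Rightarrow> ('a \<Rightarrow> 'a \<Rightarrow> bool) \<Rightarrow> (nat \<Rightarrow> 'a \<Rightarrow> int) \<Rightarrow> (nat \<Rightarrow> int) \<Rightarrow> bool" where
  "FN_feasible V E x z \<longleftrightarrow>
     (\<forall>i \<in> {1..card V}. \<forall>v \<in> V. x i v \<in> {0, 1}) \<and>
     (\<forall>i \<in> {1..card V}. z i \<in> {0, 1}) \<and>
     (\<forall>i \<in> {1..card V}. z i - (\<Sum>u\<in>V. x i u) \<le> 0) \<and>
     (\<forall>i \<in> {1..card V}. \<forall>v \<in> V. \<forall>u \<in> nbhd V E v.
        x i u - x i v + (\<Sum>w \<in> nbhd V E u - {v}. x i w) \<ge> 0) \<and>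
     (\<forall>u \<in> V. (\<Sum>i = 1..card V. x i u) \<le> 1)"

end

theory Submission
  imports Defs
begin

theorem theorem7p1:
  fixes V :: "'a set" and E :: "'a \<Rightarrow> 'a \<Rightarrow> bool"
    and x :: "nat \<Rightarrow> 'a \<Rightarrow> int" and z :: "nat \<Rightarrow> int"
  assumes "simple_graph V E"
    and "FN_feasible V E x z"
  shows "\<exists>\<F> :: 'a set set. finite \<F> \<and> (\<forall>F \<in> \<F>. is_fort V E F) \<and>
           pairwise disjnt \<F> \<and> int (card \<F>) = (\<Sum>i = 1..card V. z i)"
proof -
  let ?n = "card V"
  have fin: "finite V" and sym: "\<And>u v. E u v \<Longrightarrow> E v u" and inV: "\<And>u v. E u v \<Longrightarrow> u \<in> V \<and> v \<in> V"
    using assms(1) unfolding simple_graph_def by auto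
  have x01: "\<And>i v. i \<in> {1..?n} \<Longrightarrow> v \<in> V \<Longrightarrow> x i v \<in> {0,1}"
   and z01: "\<And>i. i \<in> {1..?n} \<Longrightarrow> z i \<in> {0,1}"
   and zc: "\<And>i. i \<in> {1..?n} \<Longrightarrow> z i - (\<Sum>u\<in>V. x i u) \<le> 0"
   and nc: "\<And>i v u. i \<in> {1..?n} \<Longrightarrow> v \<in> V \<Longrightarrow> u \<in> nbhd V E v \<Longrightarrow>
        x i u - x i v + (\<Sum>w \<in> nbhd V E u - {v}. x i w) \<ge> 0"
   and dc: "\<And>u. u \<in> V \<Longrightarrow> (\<Sum>i = 1..?n. x i u) \<le> 1"
    using assms(2) unfolding FN_feasible_def by blast+
  define I where "I = {i \<in> {1..?n}. z i = 1}"
  define Fi where "Fi i = {v \<in> V. x i v = 1}" for i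
  have nonempty: "Fi i \<noteq> {}" if "i \<in> I" for i
  proof
    assume e: "Fi i = {}"
    have i: "i \<in> {1..?n}" "z i = 1" using that I_def by auto
    have "\<forall>v\<in>V. x i v = 0" using e x01[OF i(1)] unfolding Fi_def by auto
    hence "(\<Sum>u\<in>V. x i u) = 0" by simp
    thus False using zc[OF i(1)] i(2) by simp
  qed
  have disj: "Fi i \<inter> Fi j = {}" if "i \<in> I" "j \<in> I" "i \<noteq> j" for i j
  proof (rule ccontr)
    assume "Fi i \<inter> Fi j \<noteq> {}"
    then obtain v where v: "v \<in> V" "x i v = 1" "x j v = 1" unfolding Fi_def by auto
    have ij: "{i,j} \<subseteq> {1..?n}" using that I_def by auto
    have nn: "\<forall>k\<in>{1..?n} - {i,j}. 0 \<le> x k v" using x01 v(1) by fastforce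
    have "(\<Sum>k\<in>{i,j}. x k v) \<le> (\<Sum>k = 1..?n. x k v)"
      by (rule sum_mono2[OF _ ij]) (use nn in auto)
    moreover have "(\<Sum>k\<in>{i,j}. x k v) = 2" using v that(3) by simp
    ultimately show False using dc[OF v(1)] by simp
  qed
  have fort: "is_fort V E (Fi i)" if "i \<in> I" for i
    unfolding is_fort_def
  proof (intro conjI ballI)
    show "Fi i \<noteq> {}" using nonempty that .
    show "Fi i \<subseteq> V" unfolding Fi_def by auto
  next
    fix u assume u: "u \<in> V - Fi i"
    have i: "i \<in> {1..?n}" using that I_def by auto
    show "card (nbhd V E u \<inter> Fi i) \<noteq> 1"
    proof
      assume "card (nbhd V E u \<inter> Fi i) = 1"
      then obtain v where v: "nbhd V E u \<inter> Fi i = {v}" by (auto simp: card_Suc_eq)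
      hence vV: "v \<in> V" "E u v" "x i v = 1" unfolding nbhd_def Fi_def by auto
      have xu: "x i u = 0" using u x01[OF i] unfolding Fi_def by auto
      have un: "u \<in> nbhd V E v" using vV sym u unfolding nbhd_def by auto
      have "\<forall>w \<in> nbhd V E u - {v}. x i w = 0"
      proof
        fix w assume w: "w \<in> nbhd V E u - {v}"
        hence "w \<notin> Fi i" using v by auto
        moreover have "w \<in> V" using w unfolding nbhd_def by auto
        ultimately show "x i w = 0" using x01[OF i] unfolding Fi_def by auto
      qed
      hence "(\<Sum>w \<in> nbhd V E u - {v}. x i w) = 0" by simp
      thus False using nc[OF i vV(1) un] xu vV(3) by simp
    qed
  qed
  have inj: "inj_on Fi I"
  proof (rule inj_onI)
    fix i j assume "i \<in> I" "j \<in> I" "Fi i = Fi j"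
    thus "i = j" using disj nonempty by fastforce
  qed
  have finI: "finite I" unfolding I_def by auto
  have sumz: "(\<Sum>i = 1..?n. z i) = (\<Sum>i \<in> I. z i)"
  proof -
    have "(\<Sum>i = 1..?n. z i) = (\<Sum>i \<in> I. z i) + (\<Sum>i \<in> {1..?n} - I. z i)"
      by (metis (no_types, lifting) I_def add.commute finite_atLeastAtMost mem_Collect_eq subsetI sum.subset_diff)
    moreover have "(\<Sum>i \<in> {1..?n} - I. z i) = 0"
      by (rule sum.neutral) (use z01 I_def in fastforce)
    ultimately show ?thesis by simp
  qed
  also have "\<dots> = int (card I)" using I_def by simp
  finally have sumz: "(\<Sum>i = 1..?n. z i) = int (card I)" .
  show ?thesis
  proof (intro exI conjI)
    show "finite (Fi ` I)" using finI by simp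
    show "\<forall>F\<in>Fi ` I. is_fort V E F" using fort by auto
    show "pairwise disjnt (Fi ` I)"
      unfolding pairwise_def disjnt_def using disj by fastforce
    show "int (card (Fi ` I)) = (\<Sum>i = 1..?n. z i)"
      using card_image[OF inj] sumz by simp
  qed
qed

end
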